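(* Let $P_1\ge\cdots\ge P_K>0$ and let $\Lambda_1\subseteq\Lambda_2\subseteq\cdots\subseteq\Lambda_K\subseteq\Lambda_C$ be $n$-dimensional lattices, with Voronoi regions $\mathcal R_i$ of $\Lambda_i$, nearest-neighbor quantizers $Q_i$, and $\mathcal C_i=\Lambda_C\cap\mathcal R_i$. Let $\mathbf W_1,\dots,\mathbf W_K,\mathbf U_1,\dots,\mathbf U_K,\mathbf Z$ be mutually independent, with $\mathbf W_i$ uniform on $\mathcal C_i$, $\mathbf U_i$ uniform on $\mathcal R_i$, and $\mathbf Z\sim\mathcal N(\mathbf 0,\mathbf I_n)$. Put $\mathbf X_i=(\mathbf W_i+\mathbf U_i)\bmod\Lambda_i$, $\alpha=\frac{\sum_{j=1}^KP_j}{\sum_{j=1}^KP_j+1}$, $$\mathbf T=\Big[\sum_{j=1}^K\big(\mathbf W_j-Q_j(\mathbf W_j+\mathbf U_j)\big)\Big]\bmod\Lambda_1,\qquad \tilde{\mathbf Z}=-(1-\alpha)\sum_{j=1}^K\mathbf X_j+\alpha\mathbf Z.$$ Then $\mathbf T$ is uniformly distributed over $\mathcal C_1$ and independent of $\tilde{\mathbf Z}$.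
   Context: For a lattice $\Lambda\subset\mathbb R^n$: $Q(\mathbf x)=\arg\min_{\lambda\in\Lambda}\|\mathbf x-\lambda\|$ (nearest-neighbor quantizer), $\mathbf x\bmod\Lambda=\mathbf x-Q(\mathbf x)$, Voronoi region $\mathcal R=\{\mathbf x:Q(\mathbf x)=\mathbf 0\}$, ties broken arbitrarily but consistently. *)

theory Defs
  imports "HOL-Probability.Probability"
begin

definition lattice :: "'a::euclidean_space set \<Rightarrow> bool" where
  "lattice L \<longleftrightarrow> (\<exists>B. independent B \<and> card B = DIM('a) \<and>
     L = {x. \<exists>c. (\<forall>b\<in>B. c b \<in> \<int>) \<and> x = (\<Sum>b\<in>B. c b *\<^sub>R b)})"

text \<open>Q is a nearest-neighbour quantizer of L with ties broken consistently
  (i.e. compatibly with lattice translations).\<close>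
definition nn_quantizer :: "'a::euclidean_space set \<Rightarrow> ('a \<Rightarrow> 'a) \<Rightarrow> bool" where
  "nn_quantizer L Q \<longleftrightarrow>
     (\<forall>x. Q x \<in> L \<and> (\<forall>l\<in>L. norm (x - Q x) \<le> norm (x - l))) \<and>
     (\<forall>x. \<forall>l\<in>L. Q (x + l) = Q x + l)"

definition lmod :: "('a::euclidean_space \<Rightarrow> 'a) \<Rightarrow> 'a \<Rightarrow> 'a" where
  "lmod Q x = x - Q x"

definition voronoi :: "('a::euclidean_space \<Rightarrow> 'a) \<Rightarrow> 'a set" where
  "voronoi Q = {x. Q x = 0}"

definition uniform_finite_rv :: "'w measure \<Rightarrow> ('w \<Rightarrow> 'a::euclidean_space) \<Rightarrow> 'a set \<Rightarrow> bool" where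
  "uniform_finite_rv M X C \<longleftrightarrow> X \<in> borel_measurable M \<and>
     (\<forall>A\<in>sets borel. measure M (X -` A \<inter> space M) = real (card (A \<inter> C)) / real (card C))"

definition std_gauss_density :: "real^'n \<Rightarrow> ennreal" where
  "std_gauss_density x = ennreal ((2 * pi) powr (- real CARD('n) / 2) * exp (- (norm x)\<^sup>2 / 2))"

end

theory Submission
  imports Defs
begin


lemma nnq_Q0:
  assumes "nn_quantizer L Q" shows "Q 0 = 0"
proof -
  from assms have L: "Q 0 \<in> L" and n: "norm (Q 0 - Q (Q 0)) \<le> norm (Q 0 - Q 0)"
    and c: "Q (0 + Q 0) = Q 0 + Q 0" unfolding nn_quantizer_def by blast+
  from n have "Q (Q 0) = Q 0" by simp
  with c show ?thesis by simp
qed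

lemma nnq_in: "nn_quantizer L Q \<Longrightarrow> Q x \<in> L"
  unfolding nn_quantizer_def by blast

lemma nnq_add: "nn_quantizer L Q \<Longrightarrow> l \<in> L \<Longrightarrow> Q (x + l) = Q x + l"
  unfolding nn_quantizer_def by blast

lemma nnq_neg:
  assumes "nn_quantizer L Q" "l \<in> L" shows "Q (- l) = - l" "- l \<in> L"
proof -
  have "Q (- l + l) = Q (- l) + l" using nnq_add[OF assms] .
  then show "Q (- l) = - l" using nnq_Q0[OF assms(1)] by (simp add: eq_neg_iff_add_eq_0)
  then show "- l \<in> L" using nnq_in[OF assms(1), of "-l"] by simp
qed

lemma nnq_diff: "nn_quantizer L Q \<Longrightarrow> l \<in> L \<Longrightarrow> Q (x - l) = Q x - l"
  using nnq_add[of L Q "-l" x] nnq_neg[of L Q l] by simp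

lemma lmod_add: "nn_quantizer L Q \<Longrightarrow> l \<in> L \<Longrightarrow> lmod Q (x + l) = lmod Q x"
  unfolding lmod_def using nnq_add[of L Q l x] by simp

lemma Q_lmod: "nn_quantizer L Q \<Longrightarrow> Q (lmod Q x) = 0"
  unfolding lmod_def using nnq_diff[of L Q "Q x" x] nnq_in[of L Q x] by simp

lemma lattice_countable:
  assumes "lattice (L::'a::euclidean_space set)" shows "countable L"
proof -
  from assms obtain B where B: "independent B" and L: "L = {x. \<exists>c. (\<forall>b\<in>B. c b \<in> \<int>) \<and> x = (\<Sum>b\<in>B. c b *\<^sub>R b)}"
    unfolding lattice_def by blast
  have fB: "finite B" using independent_bound[OF B] by blast
  have "L \<subseteq> (\<lambda>c. \<Sum>b\<in>B. c b *\<^sub>R b) ` (PiE B (\<lambda>_. \<int>))"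
  proof
    fix x assume "x \<in> L"
    then obtain c where c: "\<forall>b\<in>B. c b \<in> \<int>" "x = (\<Sum>b\<in>B. c b *\<^sub>R b)" using L by blast
    have "x = (\<Sum>b\<in>B. restrict c B b *\<^sub>R b)" using c(2) by (auto intro!: sum.cong)
    moreover have "restrict c B \<in> PiE B (\<lambda>_. \<int>)" using c(1) by auto
    ultimately show "x \<in> (\<lambda>c. \<Sum>b\<in>B. c b *\<^sub>R b) ` (PiE B (\<lambda>_. \<int>))" by blast
  qed
  moreover have "countable (PiE B (\<lambda>_. (\<int>::real set)))"
    using fB countable_int by (intro countable_PiE) auto
  ultimately show ?thesis by (meson countable_image countable_subset)
qed

lemma lattice_zero: "lattice L \<Longrightarrow> 0 \<in> L"
  unfolding lattice_def by (auto intro!: exI[of _ "\<lambda>_. 0"])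

lemma lattice_diff:
  assumes "lattice L" "x \<in> L" "y \<in> L" shows "x - y \<in> L"
proof -
  from assms(1) obtain B where L: "L = {x. \<exists>c. (\<forall>b\<in>B. c b \<in> \<int>) \<and> x = (\<Sum>b\<in>B. c b *\<^sub>R b)}"
    unfolding lattice_def by blast
  from assms(2,3) obtain c d where "\<forall>b\<in>B. c b \<in> \<int>" "x = (\<Sum>b\<in>B. c b *\<^sub>R b)"
     "\<forall>b\<in>B. d b \<in> \<int>" "y = (\<Sum>b\<in>B. d b *\<^sub>R b)" using L by blast
  then show ?thesis unfolding L
    by (auto intro!: exI[of _ "\<lambda>b. c b - d b"] simp: sum_subtractf scaleR_diff_left)
qed

lemma lattice_add:
  assumes "lattice L" "x \<in> L" "y \<in> L" shows "x + y \<in> L"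
  using lattice_diff[OF assms(1) assms(2) lattice_diff[OF assms(1) lattice_zero[OF assms(1)] assms(3)]]
  by simp

lemma lattice_sum:
  assumes "lattice L" "\<And>i. i \<in> I \<Longrightarrow> f i \<in> L" shows "sum f I \<in> L"
  using assms(2)
proof (induction I rule: infinite_finite_induct)
  case (infinite A) then show ?case using lattice_zero[OF assms(1)] by simp
next
  case empty then show ?case using lattice_zero[OF assms(1)] by simp
next
  case (insert x F) then show ?case using lattice_add[OF assms(1)] by simp
qed

lemma crypto_set:
  fixes Q :: "'a::euclidean_space \<Rightarrow> 'a"
  assumes nn: "nn_quantizer L Q" and Qm[measurable]: "Q \<in> borel_measurable borel"
    and cL: "countable L" and A[measurable]: "A \<in> sets borel"
  shows "emeasure lborel ({x. lmod Q (w + x) \<in> A} \<inter> voronoi Q) = emeasure lborel (A \<inter> voronoi Q)"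
proof -
  define F where "F l = {x. Q x = 0 \<and> Q (w + x) = l \<and> w + x - l \<in> A}" for l
  define G where "G l = {y. y \<in> A \<and> Q y = 0 \<and> Q (y - w) = - l}" for l
  have Fm[measurable]: "F l \<in> sets borel" for l unfolding F_def by measurable
  have Gm[measurable]: "G l \<in> sets borel" for l unfolding G_def by measurable
  have FU: "{x. lmod Q (w + x) \<in> A} \<inter> voronoi Q = (\<Union>l\<in>L. F l)"
    unfolding F_def voronoi_def lmod_def using nnq_in[OF nn] by auto
  have GU: "A \<inter> voronoi Q = (\<Union>l\<in>L. G l)"
  proof -
    have "-Q (y - w) \<in> L" for y using nnq_neg(2)[OF nn nnq_in[OF nn]] .
    then show ?thesis unfolding G_def voronoi_def by force
  qed
  have FG: "F l = (+) (w - l) -` G l" if l: "l \<in> L" for l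
  proof -
    have 1: "Q (w + x - l) = Q (w + x) - l" for x using nnq_diff[OF nn l, of "w + x"] by (simp add: algebra_simps)
    have 2: "Q (w + x - l - w) = Q x - l" for x using nnq_diff[OF nn l, of x] by (simp add: algebra_simps)
    have 3: "w - l + x = w + x - l" for x by (simp add: algebra_simps)
    show ?thesis
    proof (rule set_eqI)
      fix x
      have "x \<in> (+) (w - l) -` G l \<longleftrightarrow> w + x - l \<in> A \<and> Q (w + x) - l = 0 \<and> Q x - l = - l"
        unfolding G_def vimage_def mem_Collect_eq 3 1 2 by (rule refl)
      also have "\<dots> \<longleftrightarrow> x \<in> F l" unfolding F_def by auto
      finally show "x \<in> F l \<longleftrightarrow> x \<in> (+) (w - l) -` G l" by simp
    qed
  qed
  have eq: "emeasure lborel (F l) = emeasure lborel (G l)" if "l \<in> L" for l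
  proof -
    have "emeasure lborel (G l) = emeasure (distr lborel borel ((+) (w - l))) (G l)"
      by (simp add: lborel_distr_plus)
    also have "\<dots> = emeasure lborel ((+) (w - l) -` G l)"
      by (subst emeasure_distr) auto
    finally show ?thesis using FG[OF that] by simp
  qed
  have dF: "disjoint_family_on F L" unfolding disjoint_family_on_def F_def by auto
  have dG: "disjoint_family_on G L" unfolding disjoint_family_on_def G_def by auto
  have "emeasure lborel (\<Union>l\<in>L. F l) = (\<integral>\<^sup>+l. emeasure lborel (F l) \<partial>count_space L)"
    using dF cL by (intro emeasure_UN_countable) auto
  also have "\<dots> = (\<integral>\<^sup>+l. emeasure lborel (G l) \<partial>count_space L)"
    using eq by (intro nn_integral_cong) auto
  also have "\<dots> = emeasure lborel (\<Union>l\<in>L. G l)"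
    using dG cL by (intro emeasure_UN_countable[symmetric]) auto
  finally show ?thesis using FU GU by simp
qed



lemma (in prob_space) indep_var_prob:
  assumes "indep_var S X T Y" "A \<in> sets S" "B \<in> sets T"
  shows "prob ((X -` A \<inter> space M) \<inter> (Y -` B \<inter> space M)) = prob (X -` A \<inter> space M) * prob (Y -` B \<inter> space M)"
proof -
  from assms(1) have "indep_set (sigma_sets (space M) { X -` A \<inter> space M | A. A \<in> sets S})
      (sigma_sets (space M) { Y -` A \<inter> space M | A. A \<in> sets T})"
    unfolding indep_var_eq by blast
  then show ?thesis unfolding indep_sets2_eq
    using assms(2,3) by (blast intro: sigma_sets.Basic)
qed

lemma (in prob_space) indep_var_prob_compose:
  assumes "indep_var S X T Y" "f \<in> measurable S S'" "h \<in> measurable T T'" "A \<in> sets S'" "B \<in> sets T'"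
  shows "prob (((\<lambda>\<omega>. f (X \<omega>)) -` A \<inter> space M) \<inter> ((\<lambda>\<omega>. h (Y \<omega>)) -` B \<inter> space M))
     = prob ((\<lambda>\<omega>. f (X \<omega>)) -` A \<inter> space M) * prob ((\<lambda>\<omega>. h (Y \<omega>)) -` B \<inter> space M)"
proof -
  have X: "X \<in> measurable M S" and Y: "Y \<in> measurable M T"
    using assms(1) by (blast dest: indep_var_rv1 indep_var_rv2)+
  have fA: "f -` A \<inter> space S \<in> sets S" using assms(2,4) by measurable
  have hB: "h -` B \<inter> space T \<in> sets T" using assms(3,5) by measurable
  have 1: "(\<lambda>\<omega>. f (X \<omega>)) -` A \<inter> space M = X -` (f -` A \<inter> space S) \<inter> space M"
    using measurable_space[OF X] by auto
  have 2: "(\<lambda>\<omega>. h (Y \<omega>)) -` B \<inter> space M = Y -` (h -` B \<inter> space T) \<inter> space M"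
    using measurable_space[OF Y] by auto
  show ?thesis unfolding 1 2 by (rule indep_var_prob[OF assms(1) fA hB])
qed

lemma (in prob_space) distr_pair_indep:
  assumes X: "X \<in> measurable M S" and Y: "Y \<in> measurable M T"
    and ind: "\<And>A B. A \<in> sets S \<Longrightarrow> B \<in> sets T \<Longrightarrow>
      prob ((X -` A \<inter> space M) \<inter> (Y -` B \<inter> space M)) = prob (X -` A \<inter> space M) * prob (Y -` B \<inter> space M)"
  shows "distr M S X \<Otimes>\<^sub>M distr M T Y = distr M (S \<Otimes>\<^sub>M T) (\<lambda>x. (X x, Y x))"
proof (rule pair_measure_eqI)
  show "sigma_finite_measure (distr M S X)"
    using prob_space_distr[OF X] by (simp add: prob_space_imp_sigma_finite)
  show "sigma_finite_measure (distr M T Y)"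
    using prob_space_distr[OF Y] by (simp add: prob_space_imp_sigma_finite)
  show "sets (distr M S X \<Otimes>\<^sub>M distr M T Y) = sets (distr M (S \<Otimes>\<^sub>M T) (\<lambda>x. (X x, Y x)))"
    by simp
  fix A B assume A: "A \<in> sets (distr M S X)" and B: "B \<in> sets (distr M T Y)"
  then have A': "A \<in> sets S" and B': "B \<in> sets T" by auto
  have XY: "(\<lambda>x. (X x, Y x)) \<in> measurable M (S \<Otimes>\<^sub>M T)" using X Y by measurable
  have e: "(\<lambda>x. (X x, Y x)) -` (A \<times> B) \<inter> space M = (X -` A \<inter> space M) \<inter> (Y -` B \<inter> space M)" by auto
  have m1: "X -` A \<inter> space M \<in> events" using X A' by measurable
  have m2: "Y -` B \<inter> space M \<in> events" using Y B' by measurable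
  show "emeasure (distr M S X) A * emeasure (distr M T Y) B = emeasure (distr M (S \<Otimes>\<^sub>M T) (\<lambda>x. (X x, Y x))) (A \<times> B)"
    using A' B' X Y XY
    by (simp add: emeasure_distr e emeasure_eq_measure ind ennreal_mult)
qed

lemma (in prob_space) core:
  fixes W1 U1 V Y :: "'a \<Rightarrow> 'b::euclidean_space" and g :: "'b \<Rightarrow> 'b"
  assumes mW[measurable]: "W1 \<in> borel_measurable M" and mU[measurable]: "U1 \<in> borel_measurable M"
    and mV[measurable]: "V \<in> borel_measurable M" and mY[measurable]: "Y \<in> borel_measurable M"
    and mg[measurable]: "g \<in> borel_measurable borel"
    and I1: "\<And>A B. A \<in> sets borel \<Longrightarrow> B \<in> sets (borel \<Otimes>\<^sub>M (borel \<Otimes>\<^sub>M borel)) \<Longrightarrow>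
      prob ((W1 -` A \<inter> space M) \<inter> ((\<lambda>\<omega>. (U1 \<omega>, V \<omega>, Y \<omega>)) -` B \<inter> space M))
       = prob (W1 -` A \<inter> space M) * prob ((\<lambda>\<omega>. (U1 \<omega>, V \<omega>, Y \<omega>)) -` B \<inter> space M)"
    and I2: "\<And>A B. A \<in> sets borel \<Longrightarrow> B \<in> sets (borel \<Otimes>\<^sub>M borel) \<Longrightarrow>
      prob ((U1 -` A \<inter> space M) \<inter> ((\<lambda>\<omega>. (V \<omega>, Y \<omega>)) -` B \<inter> space M))
       = prob (U1 -` A \<inter> space M) * prob ((\<lambda>\<omega>. (V \<omega>, Y \<omega>)) -` B \<inter> space M)"
    and Wu: "uniform_finite_rv M W1 C"
    and shift: "\<And>w. distr M borel (\<lambda>\<omega>. g (w + U1 \<omega>)) = distr M borel U1"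
    and AEV: "AE \<omega> in M. V \<omega> \<in> LC"
    and bij: "\<And>v. v \<in> LC \<Longrightarrow> bij_betw (\<lambda>w. g (w + v)) C C"
    and S[measurable]: "S \<in> sets borel" and E[measurable]: "E \<in> sets borel"
  shows "prob {\<omega>\<in>space M. g (W1 \<omega> + V \<omega>) \<in> S \<and> c *\<^sub>R g (W1 \<omega> + U1 \<omega>) + Y \<omega> \<in> E}
     = real (card (S \<inter> C)) / real (card C) * prob {\<omega>\<in>space M. c *\<^sub>R U1 \<omega> + Y \<omega> \<in> E}"
proof -
  have Wu': "\<And>A. A \<in> sets borel \<Longrightarrow> prob (W1 -` A \<inter> space M) = real (card (A \<inter> C)) / real (card C)"
    using Wu unfolding uniform_finite_rv_def by blast
  have p1: "prob (W1 -` UNIV \<inter> space M) = 1" by (simp add: prob_space)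
  have "prob (W1 -` UNIV \<inter> space M) = real (card (UNIV \<inter> C)) / real (card C)" by (rule Wu') simp
  then have "real (card C) / real (card C) = 1" using p1 by simp
  then have cne: "card C \<noteq> 0" by (intro notI) simp
  have finC: "finite C"
  proof (rule ccontr)
    assume "infinite C" then have "card C = 0" by simp
    with cne show False by simp
  qed
  have Cb[measurable]: "C \<in> sets borel" by (rule borel_closed[OF finite_imp_closed[OF finC]])
  have "prob (W1 -` C \<inter> space M) = real (card (C \<inter> C)) / real (card C)" by (rule Wu'[OF Cb])
  then have "prob (W1 -` C \<inter> space M) = 1" using cne by simp
  then have "AE \<omega> in M. \<omega> \<in> W1 -` C \<inter> space M" by (rule AE_prob_1)
  then have AEW: "AE \<omega> in M. W1 \<omega> \<in> C" by eventually_elim auto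
  define ev where "ev w = {\<omega>\<in>space M. W1 \<omega> = w}" for w
  define B where "B w = {\<omega>\<in>space M. g (w + V \<omega>) \<in> S \<and> c *\<^sub>R g (w + U1 \<omega>) + Y \<omega> \<in> E}" for w
  define B' where "B' w = {\<omega>\<in>space M. g (w + V \<omega>) \<in> S \<and> c *\<^sub>R U1 \<omega> + Y \<omega> \<in> E}" for w
  define F where "F = {\<omega>\<in>space M. c *\<^sub>R U1 \<omega> + Y \<omega> \<in> E}"
  have evm[measurable]: "ev w \<in> sets M" for w unfolding ev_def by measurable
  have Bm[measurable]: "B w \<in> sets M" for w unfolding B_def by measurable
  have B'm[measurable]: "B' w \<in> sets M" for w unfolding B'_def by measurable
  have Fm[measurable]: "F \<in> sets M" unfolding F_def by measurable
  have s2: "prob {\<omega>\<in>space M. g (W1 \<omega> + V \<omega>) \<in> S \<and> c *\<^sub>R g (W1 \<omega> + U1 \<omega>) + Y \<omega> \<in> E}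
      = (\<Sum>w\<in>C. prob (ev w \<inter> B w))"
  proof -
    have "prob {\<omega>\<in>space M. g (W1 \<omega> + V \<omega>) \<in> S \<and> c *\<^sub>R g (W1 \<omega> + U1 \<omega>) + Y \<omega> \<in> E}
        = prob (\<Union>w\<in>C. ev w \<inter> B w)"
    proof (rule measure_eq_AE)
      show "AE x in M. (x \<in> {\<omega> \<in> space M. g (W1 \<omega> + V \<omega>) \<in> S \<and> c *\<^sub>R g (W1 \<omega> + U1 \<omega>) + Y \<omega> \<in> E}) = (x \<in> (\<Union>w\<in>C. ev w \<inter> B w))"
        using AEW by eventually_elim (auto simp: ev_def B_def)
      show "{\<omega> \<in> space M. g (W1 \<omega> + V \<omega>) \<in> S \<and> c *\<^sub>R g (W1 \<omega> + U1 \<omega>) + Y \<omega> \<in> E} \<in> events"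
        by measurable
      show "(\<Union>w\<in>C. ev w \<inter> B w) \<in> events" using finC by (intro sets.finite_UN) auto
    qed
    also have "\<dots> = (\<Sum>w\<in>C. prob (ev w \<inter> B w))"
      by (rule measure_finite_Union) (auto simp: finC disjoint_family_on_def ev_def)
    finally show ?thesis .
  qed
  have s3: "prob (ev w \<inter> B w) = 1 / real (card C) * prob (B w)" if w: "w \<in> C" for w
  proof -
    define D where "D = {x \<in> space (borel \<Otimes>\<^sub>M (borel \<Otimes>\<^sub>M borel)).
        g (w + fst (snd x)) \<in> S \<and> c *\<^sub>R g (w + fst x) + snd (snd x) \<in> E}"
    have Dm: "D \<in> sets (borel \<Otimes>\<^sub>M (borel \<Otimes>\<^sub>M borel))" unfolding D_def by measurable
    have "ev w = W1 -` {w} \<inter> space M" unfolding ev_def by auto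
    moreover have "B w = (\<lambda>\<omega>. (U1 \<omega>, V \<omega>, Y \<omega>)) -` D \<inter> space M"
      unfolding B_def D_def by (auto simp: space_pair_measure)
    moreover have "prob (W1 -` {w} \<inter> space M) = 1 / real (card C)"
      using Wu'[of "{w}"] w by simp
    ultimately show ?thesis using I1[of "{w}" D] Dm by simp
  qed
  have s4: "prob (B w) = prob (B' w)" for w
  proof -
    define D where "D = {x \<in> space (borel \<Otimes>\<^sub>M (borel \<Otimes>\<^sub>M borel)).
        g (w + fst (snd x)) \<in> S \<and> c *\<^sub>R fst x + snd (snd x) \<in> E}"
    have Dm: "D \<in> sets (borel \<Otimes>\<^sub>M (borel \<Otimes>\<^sub>M borel))" unfolding D_def by measurable
    have I3: "prob (((\<lambda>\<omega>. g (w + U1 \<omega>)) -` A \<inter> space M) \<inter> ((\<lambda>\<omega>. (V \<omega>, Y \<omega>)) -` B \<inter> space M))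
       = prob ((\<lambda>\<omega>. g (w + U1 \<omega>)) -` A \<inter> space M) * prob ((\<lambda>\<omega>. (V \<omega>, Y \<omega>)) -` B \<inter> space M)"
      if "A \<in> sets borel" "B \<in> sets (borel \<Otimes>\<^sub>M borel)" for A B
    proof -
      have m: "{u. g (w + u) \<in> A} \<in> sets borel" using that(1) by measurable
      have "(\<lambda>\<omega>. g (w + U1 \<omega>)) -` A \<inter> space M = U1 -` {u. g (w + u) \<in> A} \<inter> space M" by auto
      then show ?thesis using I2[OF m that(2)] by simp
    qed
    have "distr M (borel \<Otimes>\<^sub>M (borel \<Otimes>\<^sub>M borel)) (\<lambda>\<omega>. (g (w + U1 \<omega>), V \<omega>, Y \<omega>))
        = distr M borel (\<lambda>\<omega>. g (w + U1 \<omega>)) \<Otimes>\<^sub>M distr M (borel \<Otimes>\<^sub>M borel) (\<lambda>\<omega>. (V \<omega>, Y \<omega>))"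
      by (rule distr_pair_indep[symmetric]) (use I3 in auto)
    also have "\<dots> = distr M borel U1 \<Otimes>\<^sub>M distr M (borel \<Otimes>\<^sub>M borel) (\<lambda>\<omega>. (V \<omega>, Y \<omega>))"
      by (simp add: shift)
    also have "\<dots> = distr M (borel \<Otimes>\<^sub>M (borel \<Otimes>\<^sub>M borel)) (\<lambda>\<omega>. (U1 \<omega>, V \<omega>, Y \<omega>))"
      by (rule distr_pair_indep) (use I2 in auto)
    finally have eq: "distr M (borel \<Otimes>\<^sub>M (borel \<Otimes>\<^sub>M borel)) (\<lambda>\<omega>. (g (w + U1 \<omega>), V \<omega>, Y \<omega>))
        = distr M (borel \<Otimes>\<^sub>M (borel \<Otimes>\<^sub>M borel)) (\<lambda>\<omega>. (U1 \<omega>, V \<omega>, Y \<omega>))" .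
    have "B w = (\<lambda>\<omega>. (g (w + U1 \<omega>), V \<omega>, Y \<omega>)) -` D \<inter> space M"
      unfolding B_def D_def by (auto simp: space_pair_measure)
    moreover have "B' w = (\<lambda>\<omega>. (U1 \<omega>, V \<omega>, Y \<omega>)) -` D \<inter> space M"
      unfolding B'_def D_def by (auto simp: space_pair_measure)
    ultimately show ?thesis
      using measure_distr[of "\<lambda>\<omega>. (g (w + U1 \<omega>), V \<omega>, Y \<omega>)" M "borel \<Otimes>\<^sub>M (borel \<Otimes>\<^sub>M borel)" D]
        measure_distr[of "\<lambda>\<omega>. (U1 \<omega>, V \<omega>, Y \<omega>)" M "borel \<Otimes>\<^sub>M (borel \<Otimes>\<^sub>M borel)" D] Dm eq
      by simp
  qed
  have s5: "(\<Sum>w\<in>C. prob (B' w)) = real (card (S \<inter> C)) * prob F"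
  proof -
    have "(\<Sum>w\<in>C. prob (B' w)) = (\<Sum>w\<in>C. integral\<^sup>L M (indicator (B' w)))"
      using B'm by (simp add: sets.Int_space_eq2)
    also have "\<dots> = integral\<^sup>L M (\<lambda>\<omega>. \<Sum>w\<in>C. indicator (B' w) \<omega>)"
      by (subst Bochner_Integration.integral_sum) (auto simp: emeasure_eq_measure)
    also have "\<dots> = integral\<^sup>L M (\<lambda>\<omega>. real (card (S \<inter> C)) * indicator F \<omega>)"
    proof (rule integral_cong_AE)
      show "AE \<omega> in M. (\<Sum>w\<in>C. indicator (B' w) \<omega>) = real (card (S \<inter> C)) * indicator F \<omega>"
        using AEV
      proof eventually_elim
        case (elim \<omega>)
        show ?case
        proof (cases "\<omega> \<in> space M")
          case False then show ?thesis by (simp add: B'_def F_def indicator_def)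
        next
          case sp: True
          have "(\<Sum>w\<in>C. indicator (B' w) \<omega>) = (\<Sum>w\<in>C. indicator S (g (w + V \<omega>)) * indicator F \<omega> :: real)"
            by (intro sum.cong) (auto simp: B'_def F_def indicator_def sp)
          also have "\<dots> = (\<Sum>w\<in>C. indicator S (g (w + V \<omega>))) * indicator F \<omega>"
            by (simp add: sum_distrib_right)
          also have "(\<Sum>w\<in>C. indicator S (g (w + V \<omega>)) :: real) = (\<Sum>u\<in>C. indicator S u)"
            using sum.reindex_bij_betw[OF bij[OF elim], of "indicator S"] by simp
          also have "\<dots> = real (card (S \<inter> C))"
            unfolding indicator_def by (simp add: sum.If_cases finC Int_commute)
          finally show ?thesis .
        qed
      qed
    qed measurable
    also have "\<dots> = real (card (S \<inter> C)) * prob F"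
      using Fm by (simp add: sets.Int_space_eq2)
    finally show ?thesis .
  qed
  have "prob {\<omega>\<in>space M. g (W1 \<omega> + V \<omega>) \<in> S \<and> c *\<^sub>R g (W1 \<omega> + U1 \<omega>) + Y \<omega> \<in> E}
      = (\<Sum>w\<in>C. 1 / real (card C) * prob (B' w))"
    using s2 s3 s4 by simp
  also have "\<dots> = 1 / real (card C) * (\<Sum>w\<in>C. prob (B' w))"
    by (simp add: sum_distrib_left)
  finally show ?thesis using s5 unfolding F_def by simp
qed



lemma meas_sums:
  fixes Q :: "nat \<Rightarrow> 'b::euclidean_space \<Rightarrow> 'b" and a b :: "nat \<Rightarrow> 'x \<Rightarrow> 'b"
  assumes Qm: "\<And>j. j\<in>J \<Longrightarrow> Q j \<in> borel_measurable borel"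
    and am: "\<And>j. j\<in>J \<Longrightarrow> a j \<in> borel_measurable N" and bm: "\<And>j. j\<in>J \<Longrightarrow> b j \<in> borel_measurable N"
  shows "(\<lambda>x. \<Sum>j\<in>J. a j x - Q j (a j x + b j x)) \<in> borel_measurable N"
    "(\<lambda>x. \<Sum>j\<in>J. lmod (Q j) (a j x + b j x)) \<in> borel_measurable N"
proof -
  have q: "(\<lambda>x. Q j (a j x + b j x)) \<in> borel_measurable N" if "j\<in>J" for j
    using measurable_compose[OF borel_measurable_add[OF am[OF that] bm[OF that]] Qm[OF that]] .
  show "(\<lambda>x. \<Sum>j\<in>J. a j x - Q j (a j x + b j x)) \<in> borel_measurable N"
    by (intro borel_measurable_sum borel_measurable_diff q am)
  show "(\<lambda>x. \<Sum>j\<in>J. lmod (Q j) (a j x + b j x)) \<in> borel_measurable N"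
    unfolding lmod_def by (intro borel_measurable_sum borel_measurable_diff q am bm borel_measurable_add)
qed

lemma (in prob_space) unif_props:
  assumes Wu: "uniform_finite_rv M X C"
  shows "finite C" "card C \<noteq> 0" "AE \<omega> in M. X \<omega> \<in> C"
proof -
  have Wu': "\<And>A. A \<in> sets borel \<Longrightarrow> prob (X -` A \<inter> space M) = real (card (A \<inter> C)) / real (card C)"
    using Wu unfolding uniform_finite_rv_def by blast
  have p1: "prob (X -` UNIV \<inter> space M) = 1" by (simp add: prob_space)
  have "prob (X -` UNIV \<inter> space M) = real (card (UNIV \<inter> C)) / real (card C)" by (rule Wu') simp
  then have "real (card C) / real (card C) = 1" using p1 by simp
  then show cne: "card C \<noteq> 0" by (intro notI) simp
  show finC: "finite C"
  proof (rule ccontr)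
    assume "infinite C" then have "card C = 0" by simp
    with cne show False by simp
  qed
  have Cb: "C \<in> sets borel" by (rule borel_closed[OF finite_imp_closed[OF finC]])
  have "prob (X -` C \<inter> space M) = real (card (C \<inter> C)) / real (card C)" by (rule Wu'[OF Cb])
  then have "prob (X -` C \<inter> space M) = 1" using cne by simp
  then have "AE \<omega> in M. \<omega> \<in> X -` C \<inter> space M" by (rule AE_prob_1)
  then show "AE \<omega> in M. X \<omega> \<in> C" by eventually_elim auto
qed

lemma nested_sub:
  assumes nested: "\<And>i. 1 \<le> i \<Longrightarrow> i < K \<Longrightarrow> L i \<subseteq> L (Suc i)" and j: "1 \<le> j" "j \<le> K"
  shows "L j \<subseteq> L K"
  using j(2)
proof (induction j rule: inc_induct)
  case base then show ?case by simp
next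
  case (step n)
  have "1 \<le> n" using j(1) step.hyps(1) by simp
  then show ?case using nested[of n] step by auto
qed



theorem lemma2:
  fixes K :: nat
    and P :: "nat \<Rightarrow> real"
    and L :: "nat \<Rightarrow> (real^'n) set" and Q :: "nat \<Rightarrow> real^'n \<Rightarrow> real^'n"
    and LC :: "(real^'n) set"
    and M :: "'w measure"
    and W U :: "nat \<Rightarrow> 'w \<Rightarrow> real^'n" and Z :: "'w \<Rightarrow> real^'n"
  assumes K: "K \<ge> 1"
    and P_mono: "\<And>i. 1 \<le> i \<Longrightarrow> i < K \<Longrightarrow> P i \<ge> P (Suc i)"
    and P_pos: "P K > 0"
    and lat: "\<And>i. 1 \<le> i \<Longrightarrow> i \<le> K \<Longrightarrow> lattice (L i)"
    and latC: "lattice LC"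
    and nested: "\<And>i. 1 \<le> i \<Longrightarrow> i < K \<Longrightarrow> L i \<subseteq> L (Suc i)"
    and nestedC: "L K \<subseteq> LC"
    and quant: "\<And>i. 1 \<le> i \<Longrightarrow> i \<le> K \<Longrightarrow> nn_quantizer (L i) (Q i)"
    and quant_meas: "\<And>i. 1 \<le> i \<Longrightarrow> i \<le> K \<Longrightarrow> Q i \<in> borel_measurable borel"
    and M: "prob_space M"
    and indep: "prob_space.indep_vars M (\<lambda>_. borel)
        (\<lambda>j. case j of None \<Rightarrow> Z | Some (i, b) \<Rightarrow> (if b then W i else U i))
        (insert None (Some ` ({1..K} \<times> UNIV)))"
    and W_unif: "\<And>i. 1 \<le> i \<Longrightarrow> i \<le> K \<Longrightarrow> uniform_finite_rv M (W i) (LC \<inter> voronoi (Q i))"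
    and U_unif: "\<And>i. 1 \<le> i \<Longrightarrow> i \<le> K \<Longrightarrow>
        distr M lborel (U i) = uniform_measure lborel (voronoi (Q i))"
    and Z_gauss: "distr M lborel Z = density lborel std_gauss_density"
  shows "uniform_finite_rv M
           (\<lambda>\<omega>. lmod (Q 1) (\<Sum>j=1..K. W j \<omega> - Q j (W j \<omega> + U j \<omega>)))
           (LC \<inter> voronoi (Q 1))
       \<and> prob_space.indep_var M
           borel (\<lambda>\<omega>. lmod (Q 1) (\<Sum>j=1..K. W j \<omega> - Q j (W j \<omega> + U j \<omega>)))
           borel (\<lambda>\<omega>. let \<alpha> = (\<Sum>j=1..K. P j) / ((\<Sum>j=1..K. P j) + 1) in
                      (- (1 - \<alpha>)) *\<^sub>R (\<Sum>j=1..K. lmod (Q j) (W j \<omega> + U j \<omega>)) + \<alpha> *\<^sub>R Z \<omega>)"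
proof -
  interpret p: prob_space M by (rule M)
  define J where "J = insert None (Some ` ({1..K} \<times> (UNIV::bool set)))"
  define X where "X = (\<lambda>j. case j of None \<Rightarrow> Z | Some (i, b) \<Rightarrow> (if b then W i else U i))"
  have ind: "p.indep_vars (\<lambda>_. borel) X J" using indep unfolding X_def J_def .
  have rvX: "X i \<in> borel_measurable M" if "i \<in> J" for i
    using ind that unfolding p.indep_vars_def by blast
  have mW: "W j \<in> borel_measurable M" if "1 \<le> j" "j \<le> K" for j
    using rvX[of "Some (j, True)"] that by (simp add: X_def J_def)
  have mU: "U j \<in> borel_measurable M" if "1 \<le> j" "j \<le> K" for j
    using rvX[of "Some (j, False)"] that by (simp add: X_def J_def)
  have mZ: "Z \<in> borel_measurable M"
    using rvX[of None] by (simp add: X_def J_def)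
  have Lsub: "L j \<subseteq> LC" if "1 \<le> j" "j \<le> K" for j
    using nested_sub[of K L j, OF nested that] nestedC by blast
  define \<alpha> where "\<alpha> = (\<Sum>j=1..K. P j) / ((\<Sum>j=1..K. P j) + 1)"
  define c where "c = - (1 - \<alpha>)"
  define g where "g = lmod (Q 1)"
  define C where "C = LC \<inter> voronoi (Q 1)"
  define V where "V \<omega> = (\<Sum>j=2..K. W j \<omega> - Q j (W j \<omega> + U j \<omega>))" for \<omega>
  define Y where "Y \<omega> = c *\<^sub>R (\<Sum>j=2..K. lmod (Q j) (W j \<omega> + U j \<omega>)) + \<alpha> *\<^sub>R Z \<omega>" for \<omega>
  have K1: "1 \<le> K" using K .
  have q1: "nn_quantizer (L 1) (Q 1)" using quant[of 1] K1 by simp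
  have qm1[measurable]: "Q 1 \<in> borel_measurable borel" using quant_meas[of 1] K1 by simp
  have gm[measurable]: "g \<in> borel_measurable borel" unfolding g_def lmod_def by measurable
  have mW1[measurable]: "W 1 \<in> borel_measurable M" using mW[of 1] K1 by simp
  have mU1[measurable]: "U 1 \<in> borel_measurable M" using mU[of 1] K1 by simp
  have mV[measurable]: "V \<in> borel_measurable M"
    unfolding V_def by (rule meas_sums(1)) (auto intro: quant_meas mW mU)
  have mY[measurable]: "Y \<in> borel_measurable M"
    unfolding Y_def using mZ by (intro borel_measurable_add borel_measurable_scaleR borel_measurable_const
        meas_sums(2)) (auto intro: quant_meas mW mU)
  have sumsplit: "(\<Sum>j=1..K. f j) = f 1 + (\<Sum>j=2..K. f j)" for f :: "nat \<Rightarrow> real^'n"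
    using sum.atLeast_Suc_atMost[OF K1, of f] by (simp add: numeral_2_eq_2)
  have Teq: "(\<lambda>\<omega>. lmod (Q 1) (\<Sum>j=1..K. W j \<omega> - Q j (W j \<omega> + U j \<omega>))) = (\<lambda>\<omega>. g (W 1 \<omega> + V \<omega>))"
  proof
    fix \<omega>
    have l: "- Q 1 (W 1 \<omega> + U 1 \<omega>) \<in> L 1" using nnq_neg(2)[OF q1 nnq_in[OF q1]] .
    have "lmod (Q 1) (\<Sum>j=1..K. W j \<omega> - Q j (W j \<omega> + U j \<omega>))
        = lmod (Q 1) ((W 1 \<omega> + V \<omega>) + - Q 1 (W 1 \<omega> + U 1 \<omega>))"
      unfolding sumsplit V_def by (simp add: algebra_simps)
    also have "\<dots> = g (W 1 \<omega> + V \<omega>)" unfolding g_def by (rule lmod_add[OF q1 l])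
    finally show "lmod (Q 1) (\<Sum>j=1..K. W j \<omega> - Q j (W j \<omega> + U j \<omega>)) = g (W 1 \<omega> + V \<omega>)" .
  qed
  have Zeq: "(\<lambda>\<omega>. let \<alpha> = (\<Sum>j=1..K. P j) / ((\<Sum>j=1..K. P j) + 1) in
                      (- (1 - \<alpha>)) *\<^sub>R (\<Sum>j=1..K. lmod (Q j) (W j \<omega> + U j \<omega>)) + \<alpha> *\<^sub>R Z \<omega>)
      = (\<lambda>\<omega>. c *\<^sub>R g (W 1 \<omega> + U 1 \<omega>) + Y \<omega>)"
    unfolding Let_def \<alpha>_def[symmetric] c_def[symmetric] Y_def g_def sumsplit
    by (rule ext) (simp add: scaleR_add_right)
  define A1 where "A1 = {Some (1::nat, True)}"
  define B1 where "B1 = J - A1"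
  have A1J: "A1 \<subseteq> J" using K1 by (auto simp: A1_def J_def)
  have iv1: "p.indep_var (PiM A1 (\<lambda>_. borel)) (\<lambda>\<omega>. restrict (\<lambda>i. X i \<omega>) A1)
      (PiM B1 (\<lambda>_. borel)) (\<lambda>\<omega>. restrict (\<lambda>i. X i \<omega>) B1)"
    by (rule p.indep_var_restrict[OF ind]) (use A1J in \<open>auto simp: B1_def\<close>)
  define A2 where "A2 = {Some (1::nat, False)}"
  define B2 where "B2 = J - {Some (1, True), Some (1, False)}"
  have A2J: "A2 \<subseteq> J" using K1 by (auto simp: A2_def J_def)
  have iv2: "p.indep_var (PiM A2 (\<lambda>_. borel)) (\<lambda>\<omega>. restrict (\<lambda>i. X i \<omega>) A2)
      (PiM B2 (\<lambda>_. borel)) (\<lambda>\<omega>. restrict (\<lambda>i. X i \<omega>) B2)"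
    by (rule p.indep_var_restrict[OF ind]) (use A2J in \<open>auto simp: B2_def A2_def\<close>)
  define Vf where "Vf x = (\<Sum>j=2..K. x (Some (j, True)) - Q j (x (Some (j, True)) + x (Some (j, False))))"
    for x :: "(nat \<times> bool) option \<Rightarrow> real^'n"
  define Yf where "Yf x = c *\<^sub>R (\<Sum>j=2..K. lmod (Q j) (x (Some (j, True)) + x (Some (j, False)))) + \<alpha> *\<^sub>R x None"
    for x :: "(nat \<times> bool) option \<Rightarrow> real^'n"
  have compm: "(\<lambda>x. x i) \<in> borel_measurable (PiM B (\<lambda>_. borel))" if "i \<in> B" for i B
    using measurable_component_singleton[OF that, of "\<lambda>_. borel"] .
  have VYm: "Vf \<in> borel_measurable (PiM B (\<lambda>_. borel))" "Yf \<in> borel_measurable (PiM B (\<lambda>_. borel))"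
    if B: "None \<in> B" "\<And>j b. 2 \<le> j \<Longrightarrow> j \<le> K \<Longrightarrow> Some (j, b) \<in> B" for B
  proof -
    have qm: "Q j \<in> borel_measurable borel" if "j \<in> {2..K}" for j using quant_meas that by auto
    have am: "(\<lambda>x. x (Some (j, b))) \<in> borel_measurable (PiM B (\<lambda>_. borel))" if "j \<in> {2..K}" for j b
      using compm B(2) that by auto
    show "Vf \<in> borel_measurable (PiM B (\<lambda>_. borel))"
      unfolding Vf_def by (rule meas_sums(1)[of "{2..K}" Q]) (use qm am in auto)
    show "Yf \<in> borel_measurable (PiM B (\<lambda>_. borel))"
      unfolding Yf_def using compm[OF B(1)]
      by (intro borel_measurable_add borel_measurable_scaleR borel_measurable_const
        meas_sums(2)[of "{2..K}" Q]) (use qm am in auto)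
  qed
  have B1in: "None \<in> B1" "\<And>j b. 2 \<le> j \<Longrightarrow> j \<le> K \<Longrightarrow> Some (j, b) \<in> B1" "Some (1, False) \<in> B1"
    using K1 by (auto simp: B1_def A1_def J_def)
  have B2in: "None \<in> B2" "\<And>j b. 2 \<le> j \<Longrightarrow> j \<le> K \<Longrightarrow> Some (j, b) \<in> B2"
    using K1 by (auto simp: B2_def J_def)
  have VfX: "Vf (restrict (\<lambda>i. X i \<omega>) B) = V \<omega>" "Yf (restrict (\<lambda>i. X i \<omega>) B) = Y \<omega>"
    if B: "None \<in> B" "\<And>j b. 2 \<le> j \<Longrightarrow> j \<le> K \<Longrightarrow> Some (j, b) \<in> B" for B \<omega>
    using B unfolding Vf_def Yf_def V_def Y_def by (auto simp: X_def intro!: sum.cong)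
  have I1: "p.prob ((W 1 -` A \<inter> space M) \<inter> ((\<lambda>\<omega>. (U 1 \<omega>, V \<omega>, Y \<omega>)) -` B \<inter> space M))
       = p.prob (W 1 -` A \<inter> space M) * p.prob ((\<lambda>\<omega>. (U 1 \<omega>, V \<omega>, Y \<omega>)) -` B \<inter> space M)"
    if "A \<in> sets borel" "B \<in> sets (borel \<Otimes>\<^sub>M (borel \<Otimes>\<^sub>M borel))" for A B
  proof -
    have f: "(\<lambda>x. x (Some (1, True))) \<in> borel_measurable (PiM A1 (\<lambda>_. borel))"
      by (rule compm) (simp add: A1_def)
    have h: "(\<lambda>x. (x (Some (1, False)), Vf x, Yf x)) \<in> measurable (PiM B1 (\<lambda>_. borel)) (borel \<Otimes>\<^sub>M (borel \<Otimes>\<^sub>M borel))"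
      using compm[OF B1in(3)] VYm[OF B1in(1,2)] by (intro measurable_Pair) auto
    have e1: "(\<lambda>\<omega>. restrict (\<lambda>i. X i \<omega>) A1 (Some (1, True))) = W 1" by (auto simp: A1_def X_def)
    have e2: "(\<lambda>\<omega>. (restrict (\<lambda>i. X i \<omega>) B1 (Some (1, False)), Vf (restrict (\<lambda>i. X i \<omega>) B1), Yf (restrict (\<lambda>i. X i \<omega>) B1)))
        = (\<lambda>\<omega>. (U 1 \<omega>, V \<omega>, Y \<omega>))"
    proof (rule ext)
      fix \<omega> show "(restrict (\<lambda>i. X i \<omega>) B1 (Some (1, False)), Vf (restrict (\<lambda>i. X i \<omega>) B1), Yf (restrict (\<lambda>i. X i \<omega>) B1)) = (U 1 \<omega>, V \<omega>, Y \<omega>)"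
        using VfX[OF B1in(1,2), of \<omega>] B1in(3) by (simp add: X_def)
    qed
    show ?thesis using p.indep_var_prob_compose[OF iv1 f h that] unfolding e1 e2 .
  qed
  have I2: "p.prob ((U 1 -` A \<inter> space M) \<inter> ((\<lambda>\<omega>. (V \<omega>, Y \<omega>)) -` B \<inter> space M))
       = p.prob (U 1 -` A \<inter> space M) * p.prob ((\<lambda>\<omega>. (V \<omega>, Y \<omega>)) -` B \<inter> space M)"
    if "A \<in> sets borel" "B \<in> sets (borel \<Otimes>\<^sub>M borel)" for A B
  proof -
    have f: "(\<lambda>x. x (Some (1, False))) \<in> borel_measurable (PiM A2 (\<lambda>_. borel))"
      by (rule compm) (simp add: A2_def)
    have h: "(\<lambda>x. (Vf x, Yf x)) \<in> measurable (PiM B2 (\<lambda>_. borel)) (borel \<Otimes>\<^sub>M borel)"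
      using VYm[OF B2in(1,2)] by (intro measurable_Pair) auto
    have e1: "(\<lambda>\<omega>. restrict (\<lambda>i. X i \<omega>) A2 (Some (1, False))) = U 1" by (auto simp: A2_def X_def)
    have e2: "(\<lambda>\<omega>. (Vf (restrict (\<lambda>i. X i \<omega>) B2), Yf (restrict (\<lambda>i. X i \<omega>) B2)))
        = (\<lambda>\<omega>. (V \<omega>, Y \<omega>))"
      using VfX[OF B2in(1,2)] by simp
    show ?thesis using p.indep_var_prob_compose[OF iv2 f h that] unfolding e1 e2 .
  qed
  have Wu: "uniform_finite_rv M (W 1) C" using W_unif[of 1] K1 by (simp add: C_def)
  have finC: "finite C" using p.unif_props(1)[OF Wu] .
  have cne: "card C \<noteq> 0" using p.unif_props(2)[OF Wu] .
  have vorm: "voronoi (Q 1) \<in> sets borel" unfolding voronoi_def by measurable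
  have shift: "distr M borel (\<lambda>\<omega>. g (w + U 1 \<omega>)) = distr M borel (U 1)" for w
  proof (rule measure_eqI)
    show "sets (distr M borel (\<lambda>\<omega>. g (w + U 1 \<omega>))) = sets (distr M borel (U 1))" by simp
    fix A assume "A \<in> sets (distr M borel (\<lambda>\<omega>. g (w + U 1 \<omega>)))"
    then have A[measurable]: "A \<in> sets borel" by simp
    have pre: "{x. g (w + x) \<in> A} \<in> sets borel" by measurable
    have gU: "(\<lambda>\<omega>. g (w + U 1 \<omega>)) \<in> borel_measurable M" by measurable
    have ud: "distr M lborel (U 1) = uniform_measure lborel (voronoi (Q 1))" using U_unif[of 1] K1 by simp
    have "emeasure (distr M borel (\<lambda>\<omega>. g (w + U 1 \<omega>))) A = emeasure M (U 1 -` {x. g (w + x) \<in> A} \<inter> space M)"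
      by (subst emeasure_distr[OF gU A]) (auto intro!: arg_cong[where f="emeasure M"])
    also have "\<dots> = emeasure (distr M lborel (U 1)) {x. g (w + x) \<in> A}"
      using pre mU1 by (subst emeasure_distr) auto
    also have "\<dots> = emeasure lborel (voronoi (Q 1) \<inter> {x. g (w + x) \<in> A}) / emeasure lborel (voronoi (Q 1))"
      unfolding ud using pre vorm by (subst emeasure_uniform_measure) auto
    also have "voronoi (Q 1) \<inter> {x. g (w + x) \<in> A} = {x. lmod (Q 1) (w + x) \<in> A} \<inter> voronoi (Q 1)"
      unfolding g_def by auto
    also have "emeasure lborel \<dots> = emeasure lborel (A \<inter> voronoi (Q 1))"
      using crypto_set[OF q1 qm1 lattice_countable[OF lat[of 1]] A] K1 by simp
    also have "\<dots> / emeasure lborel (voronoi (Q 1)) = emeasure (distr M lborel (U 1)) A"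
      unfolding ud using A vorm by (subst emeasure_uniform_measure) (auto simp: Int_commute)
    also have "\<dots> = emeasure (distr M borel (U 1)) A"
    proof -
      have "emeasure (distr M lborel (U 1)) A = emeasure M (U 1 -` A \<inter> space M)"
        by (rule emeasure_distr) (use mU1 A in auto)
      also have "\<dots> = emeasure (distr M borel (U 1)) A"
        by (rule emeasure_distr[symmetric]) (use mU1 A in auto)
      finally show ?thesis .
    qed
    finally show "emeasure (distr M borel (\<lambda>\<omega>. g (w + U 1 \<omega>))) A = emeasure (distr M borel (U 1)) A" .
  qed
  have AEV: "AE \<omega> in M. V \<omega> \<in> LC"
  proof -
    have "\<forall>j\<in>{2..K}. AE \<omega> in M. W j \<omega> \<in> LC \<inter> voronoi (Q j)"
    proof
      fix j assume "j \<in> {2..K}"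
      then have "uniform_finite_rv M (W j) (LC \<inter> voronoi (Q j))" using W_unif by simp
      then show "AE \<omega> in M. W j \<omega> \<in> LC \<inter> voronoi (Q j)" by (rule p.unif_props(3))
    qed
    then have "AE \<omega> in M. \<forall>j\<in>{2..K}. W j \<omega> \<in> LC \<inter> voronoi (Q j)"
      by (intro eventually_ball_finite) auto
    then show ?thesis
    proof eventually_elim
      case (elim \<omega>)
      show ?case unfolding V_def
      proof (rule lattice_sum[OF latC])
        fix j assume j: "j \<in> {2..K}"
        have "Q j (W j \<omega> + U j \<omega>) \<in> LC" using nnq_in[OF quant[of j]] Lsub[of j] j by auto
        then show "W j \<omega> - Q j (W j \<omega> + U j \<omega>) \<in> LC" using elim j lattice_diff[OF latC] by auto
      qed
    qed
  qed
  have bij: "bij_betw (\<lambda>w. g (w + v)) C C" if v: "v \<in> LC" for v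
  proof -
    have L1C: "L 1 \<subseteq> LC" using Lsub[of 1] K1 by simp
    have sub: "(\<lambda>w. g (w + v)) ` C \<subseteq> C"
    proof
      fix y assume "y \<in> (\<lambda>w. g (w + v)) ` C"
      then obtain w where w: "w \<in> C" "y = g (w + v)" by blast
      have "Q 1 (w + v) \<in> LC" using nnq_in[OF q1] L1C by blast
      then have "y \<in> LC" using w v unfolding g_def lmod_def C_def
        by (auto intro: lattice_diff[OF latC] lattice_add[OF latC])
      moreover have "Q 1 y = 0" using Q_lmod[OF q1] w(2) unfolding g_def by simp
      ultimately show "y \<in> C" by (simp add: C_def voronoi_def)
    qed
    have inj: "inj_on (\<lambda>w. g (w + v)) C"
    proof (rule inj_onI)
      fix w w' assume w: "w \<in> C" "w' \<in> C" "g (w + v) = g (w' + v)"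
      define d where "d = Q 1 (w + v) - Q 1 (w' + v)"
      have d: "d \<in> L 1" unfolding d_def using lattice_diff[OF lat[of 1]] nnq_in[OF q1] K1 by simp
      have "w = w' + d" using w(3) unfolding g_def lmod_def d_def by (simp add: algebra_simps)
      then have "Q 1 w = Q 1 w' + d" using nnq_add[OF q1 d] by simp
      then have "d = 0" using w(1,2) by (simp add: C_def voronoi_def)
      then show "w = w'" using \<open>w = w' + d\<close> by simp
    qed
    have "card ((\<lambda>w. g (w + v)) ` C) = card C" using card_image[OF inj] .
    then have "(\<lambda>w. g (w + v)) ` C = C" using card_subset_eq[OF finC sub] by simp
    then show ?thesis using inj unfolding bij_betw_def by simp
  qed
  have key: "p.prob {\<omega>\<in>space M. g (W 1 \<omega> + V \<omega>) \<in> S \<and> c *\<^sub>R g (W 1 \<omega> + U 1 \<omega>) + Y \<omega> \<in> E}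
     = real (card (S \<inter> C)) / real (card C) * p.prob {\<omega>\<in>space M. c *\<^sub>R U 1 \<omega> + Y \<omega> \<in> E}"
    if "S \<in> sets borel" "E \<in> sets borel" for S E
    by (rule p.core[OF mW1 mU1 mV mY gm I1 I2 Wu shift AEV bij that]) auto
  define T where "T \<omega> = g (W 1 \<omega> + V \<omega>)" for \<omega>
  define Zt where "Zt \<omega> = c *\<^sub>R g (W 1 \<omega> + U 1 \<omega>) + Y \<omega>" for \<omega>
  have Tm[measurable]: "T \<in> borel_measurable M" unfolding T_def by measurable
  have Ztm[measurable]: "Zt \<in> borel_measurable M" unfolding Zt_def by measurable
  have unifT: "p.prob (T -` A \<inter> space M) = real (card (A \<inter> C)) / real (card C)" if A: "A \<in> sets borel" for A
  proof -
    have "T -` A \<inter> space M = {\<omega>\<in>space M. g (W 1 \<omega> + V \<omega>) \<in> A \<and> c *\<^sub>R g (W 1 \<omega> + U 1 \<omega>) + Y \<omega> \<in> UNIV}"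
      unfolding T_def by auto
    moreover have "{\<omega>\<in>space M. c *\<^sub>R U 1 \<omega> + Y \<omega> \<in> UNIV} = space M" by auto
    ultimately show ?thesis using key[OF A, of UNIV] by (simp add: p.prob_space)
  qed
  have ZtZ0: "p.prob (Zt -` B \<inter> space M) = p.prob {\<omega>\<in>space M. c *\<^sub>R U 1 \<omega> + Y \<omega> \<in> B}" if B: "B \<in> sets borel" for B
  proof -
    have "Zt -` B \<inter> space M = {\<omega>\<in>space M. g (W 1 \<omega> + V \<omega>) \<in> UNIV \<and> c *\<^sub>R g (W 1 \<omega> + U 1 \<omega>) + Y \<omega> \<in> B}"
      unfolding Zt_def by auto
    then show ?thesis using key[OF _ B, of UNIV] cne by simp
  qed
  have prodTZ: "p.prob ((T -` A \<inter> space M) \<inter> (Zt -` B \<inter> space M)) = p.prob (T -` A \<inter> space M) * p.prob (Zt -` B \<inter> space M)"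
    if A: "A \<in> sets borel" and B: "B \<in> sets borel" for A B
  proof -
    have "(T -` A \<inter> space M) \<inter> (Zt -` B \<inter> space M) = {\<omega>\<in>space M. g (W 1 \<omega> + V \<omega>) \<in> A \<and> c *\<^sub>R g (W 1 \<omega> + U 1 \<omega>) + Y \<omega> \<in> B}"
      unfolding T_def Zt_def by auto
    then show ?thesis using key[OF A B] unifT[OF A] ZtZ0[OF B] by simp
  qed
  have "uniform_finite_rv M T C"
    unfolding uniform_finite_rv_def using Tm unifT by blast
  moreover have "p.indep_var borel T borel Zt"
    unfolding p.indep_var_distribution_eq
    using Tm Ztm by (auto intro!: p.distr_pair_indep prodTZ)
  moreover have "T = (\<lambda>\<omega>. lmod (Q 1) (\<Sum>j=1..K. W j \<omega> - Q j (W j \<omega> + U j \<omega>)))"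
    unfolding T_def using Teq by simp
  moreover have "Zt = (\<lambda>\<omega>. let \<alpha> = (\<Sum>j=1..K. P j) / ((\<Sum>j=1..K. P j) + 1) in
                      (- (1 - \<alpha>)) *\<^sub>R (\<Sum>j=1..K. lmod (Q j) (W j \<omega> + U j \<omega>)) + \<alpha> *\<^sub>R Z \<omega>)"
    unfolding Zt_def using Zeq by simp
  ultimately show ?thesis unfolding C_def by simp
qed

end
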